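(* Let $\mathcal{B}=\langle V,F,E\rangle$ be a finite bipartite graph and $W\subseteq V$ such that the subgraph $\mathcal{B}'$ of $\mathcal{B}$ induced by $(V\setminus W)\cup F$ is self-contained. Then for every perfect matching $M$ of $\mathcal{B}'$, the output of Algorithm 2 (causal ordering via the perfect matching $M$) applied to $(W,\mathcal{B})$ coincides with the output of Algorithm 1 applied to $(W,\mathcal{B})$.
   Context: A bipartite graph $\mathcal{B}=\langle V,F,E\rangle$ has disjoint vertex sets $V$, $F$ and undirected edges $(v-f)$ with $v\in V$, $f\in F$; $\mathrm{adj}_{\mathcal{B}}(X)$ denotes the set of vertices adjacent to some vertex of $X$. A set $F'\subseteq F$ is self-contained if $|F'|=|\mathrm{adj}_{\mathcal{B}}(F')|$ and $|F''|\le|\mathrm{adj}_{\mathcal{B}}(F'')|$ for all $F''\subseteq F'$; $\mathcal{B}$ is self-contained if $|F|=|V|$ and $F$ is self-contained; a non-empty self-contained set is minimal self-contained if no non-empty strict subset is self-contained. A matching is a set of edges with no common endpoints; it is perfect if every vertex is matched. For a matching $M$ and a set of vertices $X$, $M(X)$ is the set of vertices matched by $M$ to some vertex of $X$. A directed cluster graph is a pair $\langle\mathcal{V},\mathcal{E}\rangle$ with $\mathcal{V}$ a partition of a vertex set and $\mathcal{E}$ a set of edges $x\to C$ from vertices to clusters. Algorithm 1. Initialize $\mathcal{E}=\emptyset$, $\mathcal{V}=\{\{w\}:w\in W\}$, $\mathcal{B}'=\langle V',F',E'\rangle$ the subgraph induced by $(V\setminus W)\cup F$. While $\mathcal{B}'$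 is not the null graph: choose a minimal self-contained set $S_F\subseteq F'$ of $\mathcal{B}'$; let $C=S_F\cup\mathrm{adj}_{\mathcal{B}'}(S_F)$; add $C$ to $\mathcal{V}$; for every $v\in\mathrm{adj}_{\mathcal{B}}(S_F)\setminus\mathrm{adj}_{\mathcal{B}'}(S_F)$ add $v\to C$ to $\mathcal{E}$; replace $\mathcal{B}'$ by its subgraph induced by $(V'\cup F')\setminus C$. Output $\langle\mathcal{V},\mathcal{E}\rangle$. (Its output is independent of the choices made.) Algorithm 2 (with perfect matching $M$ of $\mathcal{B}'$). (i) Orient edges: form the directed graph $\mathcal{G}(\mathcal{B},M)$ on $V\cup F$ containing, for each $(v-f)\in E$, the edge $f\to v$ if $(v-f)\in M$ and the edge $v\to f$ otherwise. (ii) Construct clusters: let $\mathcal{V}'$ be the partition of $V\cup F$ into strongly connected components of $\mathcal{G}(\mathcal{B},M)$, and $\mathcal{E}'=\{x\to \mathrm{cl}(w): (x\to w)\text{ in }\mathcal{G}(\mathcal{B},M),\ x\notin\mathrm{cl}(w)\}$, where $\mathrm{cl}(w)$ is the component containing $w$. (iii) Merge clusters: $\mathcal{V}=\{S\cup M(S):S\in\mathcal{V}'\}$ and $\mathcal{E}=\{x\to S\cup M(S): (x\to S)\in\mathcal{E}',\ x\notin M(S)\}$. Output $\langle\mathcal{V},\mathcal{E}\rangle$. *)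

theory Defs
  imports Main
begin

definition bipartite :: "'a set \<Rightarrow> 'a set \<Rightarrow> ('a \<times> 'a) set \<Rightarrow> bool" where
  "bipartite V F E \<longleftrightarrow> V \<inter> F = {} \<and> E \<subseteq> V \<times> F"

definition adj :: "('a \<times> 'a) set \<Rightarrow> 'a set \<Rightarrow> 'a set" where
  "adj E X = {y. \<exists>x\<in>X. (x, y) \<in> E \<or> (y, x) \<in> E}"

definition induced_edges :: "('a \<times> 'a) set \<Rightarrow> 'a set \<Rightarrow> 'a set \<Rightarrow> ('a \<times> 'a) set" where
  "induced_edges E V' F' = E \<inter> (V' \<times> F')"

definition self_contained_set :: "'a set \<Rightarrow> ('a \<times> 'a) set \<Rightarrow> 'a set \<Rightarrow> bool" where
  "self_contained_set F E F' \<longleftrightarrow> F' \<subseteq> F \<and> card F' = card (adj E F') \<and>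
     (\<forall>F''. F'' \<subseteq> F' \<longrightarrow> card F'' \<le> card (adj E F''))"

definition self_contained :: "'a set \<Rightarrow> 'a set \<Rightarrow> ('a \<times> 'a) set \<Rightarrow> bool" where
  "self_contained V F E \<longleftrightarrow> card F = card V \<and> self_contained_set F E F"

definition minimal_self_contained :: "'a set \<Rightarrow> ('a \<times> 'a) set \<Rightarrow> 'a set \<Rightarrow> bool" where
  "minimal_self_contained F E S \<longleftrightarrow> S \<noteq> {} \<and> self_contained_set F E S \<and>
     (\<forall>S'. S' \<subset> S \<and> S' \<noteq> {} \<longrightarrow> \<not> self_contained_set F E S')"

type_synonym 'a cluster_graph = "'a set set \<times> ('a \<times> 'a set) set"

text \<open>Algorithm 1. State: (clusters, cluster edges, V', F') where the current graph B'
  is the subgraph of B = (V,F,E) induced by V' \<union> F'. One iteration of the loop:\<close>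
inductive alg1_step :: "('a \<times> 'a) set \<Rightarrow>
    ('a set set \<times> ('a \<times> 'a set) set \<times> 'a set \<times> 'a set) \<Rightarrow>
    ('a set set \<times> ('a \<times> 'a set) set \<times> 'a set \<times> 'a set) \<Rightarrow> bool"
  for E where
  "minimal_self_contained F' (induced_edges E V' F') S \<Longrightarrow>
   C = S \<union> adj (induced_edges E V' F') S \<Longrightarrow>
   alg1_step E (Vc, Ec, V', F')
     (insert C Vc, Ec \<union> {(v, C) | v. v \<in> adj E S - adj (induced_edges E V' F') S},
      V' - C, F' - C)"

text \<open>O is an output of (some run of) Algorithm 1 applied to (W, B): the loop runs
  from the initial state until B' is the null graph.\<close>
definition alg1_output :: "'a set \<Rightarrow> 'a set \<Rightarrow> ('a \<times> 'a) set \<Rightarrow> 'a set \<Rightarrow> 'a cluster_graph \<Rightarrow> bool" where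
  "alg1_output V F E W Out \<longleftrightarrow>
     (\<exists>Vc Ec. (alg1_step E)\<^sup>*\<^sup>* ({{w} | w. w \<in> W}, {}, V - W, F) (Vc, Ec, {}, {})
              \<and> Out = (Vc, Ec))"

definition matching :: "('a \<times> 'a) set \<Rightarrow> ('a \<times> 'a) set \<Rightarrow> bool" where
  "matching E M \<longleftrightarrow> M \<subseteq> E \<and>
     (\<forall>e\<in>M. \<forall>e'\<in>M. e \<noteq> e' \<longrightarrow> {fst e, snd e} \<inter> {fst e', snd e'} = {})"

definition perfect_matching :: "'a set \<Rightarrow> ('a \<times> 'a) set \<Rightarrow> ('a \<times> 'a) set \<Rightarrow> bool" where
  "perfect_matching X E M \<longleftrightarrow> matching E M \<and>
     (\<forall>x\<in>X. \<exists>e\<in>M. x = fst e \<or> x = snd e)"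

definition matched_to :: "('a \<times> 'a) set \<Rightarrow> 'a set \<Rightarrow> 'a set" where
  "matched_to M X = {y. \<exists>x\<in>X. (x, y) \<in> M \<or> (y, x) \<in> M}"

definition orient :: "('a \<times> 'a) set \<Rightarrow> ('a \<times> 'a) set \<Rightarrow> ('a \<times> 'a) set" where
  "orient E M = {(f, v) | v f. (v, f) \<in> E \<and> (v, f) \<in> M} \<union>
                {(v, f) | v f. (v, f) \<in> E \<and> (v, f) \<notin> M}"

definition scc :: "'a set \<Rightarrow> ('a \<times> 'a) set \<Rightarrow> 'a \<Rightarrow> 'a set" where
  "scc X G w = {x \<in> X. (w, x) \<in> G\<^sup>* \<and> (x, w) \<in> G\<^sup>*}"

definition alg2_clusters :: "'a set \<Rightarrow> 'a set \<Rightarrow> ('a \<times> 'a) set \<Rightarrow> ('a \<times> 'a) set \<Rightarrow> 'a cluster_graph" where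
  "alg2_clusters V F E M =
     (let G = orient E M; X = V \<union> F in
      (scc X G ` X,
       {(x, scc X G w) | x w. (x, w) \<in> G \<and> x \<notin> scc X G w}))"

definition alg2_output :: "'a set \<Rightarrow> 'a set \<Rightarrow> ('a \<times> 'a) set \<Rightarrow> ('a \<times> 'a) set \<Rightarrow> 'a cluster_graph" where
  "alg2_output V F E M =
     (let (Vc', Ec') = alg2_clusters V F E M in
      ({S \<union> matched_to M S | S. S \<in> Vc'},
       {(x, S \<union> matched_to M S) | x S. (x, S) \<in> Ec' \<and> x \<notin> matched_to M S}))"

end

theory Submission
  imports Defs
begin

locale setting =
  fixes V F W :: "'a set" and E M :: "('a \<times> 'a) set"
  assumes finV: "finite V" and finF: "finite F" and bip: "bipartite V F E" and WV: "W \<subseteq> V"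
    and pm: "perfect_matching ((V - W) \<union> F) (induced_edges E (V - W) F) M"
begin

abbreviation "G \<equiv> orient E M"
abbreviation "X \<equiv> V \<union> F"
abbreviation "sc x \<equiv> scc X G x"
abbreviation "K x \<equiv> sc x \<union> matched_to M (sc x)"

lemma VF: "V \<inter> F = {}" and EVF: "E \<subseteq> V \<times> F"
  using bip unfolding bipartite_def by auto

lemma MsubE: "M \<subseteq> E" and MVF: "M \<subseteq> (V - W) \<times> F"
  using pm unfolding perfect_matching_def matching_def induced_edges_def by auto

lemma M_unique_v: "(v,g) \<in> M \<Longrightarrow> (v',g) \<in> M \<Longrightarrow> v = v'"
proof (rule ccontr)
  assume a: "(v,g) \<in> M" "(v',g) \<in> M" "v \<noteq> v'"
  hence "{fst (v,g), snd (v,g)} \<inter> {fst (v',g), snd (v',g)} = {}"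
    using pm unfolding perfect_matching_def matching_def by blast
  thus False by auto
qed

lemma M_unique_g: "(v,g) \<in> M \<Longrightarrow> (v,g') \<in> M \<Longrightarrow> g = g'"
proof (rule ccontr)
  assume a: "(v,g) \<in> M" "(v,g') \<in> M" "g \<noteq> g'"
  hence "{fst (v,g), snd (v,g)} \<inter> {fst (v,g'), snd (v,g')} = {}"
    using pm unfolding perfect_matching_def matching_def by blast
  thus False by auto
qed

lemma cover_F: "g \<in> F \<Longrightarrow> \<exists>v. (v,g) \<in> M"
proof -
  assume g: "g \<in> F"
  then obtain e where e: "e \<in> M" "g = fst e \<or> g = snd e"
    using pm unfolding perfect_matching_def by blast
  obtain a b where ab: "e = (a,b)" by (cases e)
  with e MVF g VF show ?thesis by auto
qed

lemma cover_V: "v \<in> V - W \<Longrightarrow> \<exists>g. (v,g) \<in> M"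
proof -
  assume g: "v \<in> V - W"
  then obtain e where e: "e \<in> M" "v = fst e \<or> v = snd e"
    using pm unfolding perfect_matching_def by blast
  obtain a b where ab: "e = (a,b)" by (cases e)
  with e MVF g VF show ?thesis by auto
qed

lemma G_iff: "(x,y) \<in> G \<longleftrightarrow> ((y,x) \<in> E \<and> (y,x) \<in> M) \<or> ((x,y) \<in> E \<and> (x,y) \<notin> M)"
  unfolding orient_def by auto

lemma G_into_V: "(x,y) \<in> G \<Longrightarrow> y \<in> V \<Longrightarrow> (y,x) \<in> M"
  using G_iff EVF VF by blast

lemma G_from_F: "(x,y) \<in> G \<Longrightarrow> x \<in> F \<Longrightarrow> (y,x) \<in> M"
  using G_iff EVF VF by blast

lemma G_into_F: "(x,y) \<in> G \<Longrightarrow> y \<in> F \<Longrightarrow> (x,y) \<in> E \<and> (x,y) \<notin> M"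
  using G_iff EVF VF MsubE by blast

lemma G_X: "(x,y) \<in> G \<Longrightarrow> x \<in> X \<and> y \<in> X"
  using G_iff EVF by blast

lemma matched_F: "Q \<subseteq> F \<Longrightarrow> matched_to M Q = {v. \<exists>g\<in>Q. (v,g) \<in> M}"
  unfolding matched_to_def using MVF VF by blast

lemma matched_card: assumes "Q \<subseteq> F" shows "card (matched_to M Q) = card Q"
proof -
  let ?A = "M \<inter> (UNIV \<times> Q)"
  have 1: "matched_to M Q = fst ` ?A" using matched_F[OF assms] by force
  have 2: "Q = snd ` ?A" using cover_F assms by force
  have i1: "inj_on fst ?A" unfolding inj_on_def using M_unique_g by auto
  have i2: "inj_on snd ?A" unfolding inj_on_def using M_unique_v by auto
  show ?thesis using 1 2 card_image[OF i1] card_image[OF i2] by simp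
qed


definition inv :: "'a set \<Rightarrow> 'a set \<Rightarrow> bool" where
  "inv V' F' \<longleftrightarrow> F' \<subseteq> F \<and> V' \<subseteq> V - W \<and> (\<forall>v g. (v,g) \<in> M \<longrightarrow> (v \<in> V' \<longleftrightarrow> g \<in> F')) \<and>
     (\<forall>x y. (x,y) \<in> G \<longrightarrow> x \<in> V' \<union> F' \<longrightarrow> y \<in> V' \<union> F')"

lemma inv_rtr: assumes "inv V' F'" "(x,y) \<in> G\<^sup>*" "x \<in> V' \<union> F'" shows "y \<in> V' \<union> F'"
  using assms(2,3)
proof (induction rule: rtrancl_induct)
  case base then show ?case by simp
next
  case (step y z) then show ?case using assms(1) unfolding inv_def by auto
qed

lemma adj_E'_iff: assumes "inv V' F'" "Q \<subseteq> F'"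
  shows "v \<in> adj (induced_edges E V' F') Q \<longleftrightarrow> v \<in> V' \<and> (\<exists>g\<in>Q. (v,g) \<in> E)"
proof -
  have QF: "Q \<subseteq> F" using assms unfolding inv_def by blast
  show ?thesis
  proof
    assume "v \<in> adj (induced_edges E V' F') Q"
    then obtain x where x: "x \<in> Q" "(x,v) \<in> E \<inter> V' \<times> F' \<or> (v,x) \<in> E \<inter> V' \<times> F'"
      unfolding adj_def induced_edges_def by blast
    have "x \<notin> V" using x QF VF by blast
    with x(2) have "(v,x) \<in> E \<inter> V' \<times> F'" using EVF by blast
    thus "v \<in> V' \<and> (\<exists>g\<in>Q. (v,g) \<in> E)" using x by blast
  next
    assume "v \<in> V' \<and> (\<exists>g\<in>Q. (v,g) \<in> E)"
    then obtain g where "v \<in> V'" "g \<in> Q" "(v,g) \<in> E" by blast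
    thus "v \<in> adj (induced_edges E V' F') Q" unfolding adj_def induced_edges_def using assms(2) by blast
  qed
qed

lemma M_sub_adj: assumes "inv V' F'" "Q \<subseteq> F'"
  shows "matched_to M Q \<subseteq> adj (induced_edges E V' F') Q"
proof
  fix v assume "v \<in> matched_to M Q"
  moreover have QF: "Q \<subseteq> F" using assms unfolding inv_def by blast
  ultimately obtain g where g: "g \<in> Q" "(v,g) \<in> M" using matched_F by blast
  hence "v \<in> V'" using assms unfolding inv_def by auto
  thus "v \<in> adj (induced_edges E V' F') Q" using adj_E'_iff[OF assms] g MsubE by blast
qed

lemma adj_fin: assumes "inv V' F'" "Q \<subseteq> F'" shows "finite (adj (induced_edges E V' F') Q)"
proof -
  have "V' \<subseteq> V" using assms(1) unfolding inv_def by blast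
  hence "adj (induced_edges E V' F') Q \<subseteq> V" using adj_E'_iff[OF assms] by blast
  thus ?thesis using finV finite_subset by blast
qed

lemma sc_iff: assumes "inv V' F'" "Q \<subseteq> F'"
  shows "self_contained_set F' (induced_edges E V' F') Q \<longleftrightarrow>
         adj (induced_edges E V' F') Q \<subseteq> matched_to M Q"
proof
  assume a: "self_contained_set F' (induced_edges E V' F') Q"
  have QF: "Q \<subseteq> F" using assms unfolding inv_def by blast
  have "card (matched_to M Q) = card (adj (induced_edges E V' F') Q)"
    using a matched_card[OF QF] unfolding self_contained_set_def by simp
  thus "adj (induced_edges E V' F') Q \<subseteq> matched_to M Q"
    using card_subset_eq[OF adj_fin[OF assms] M_sub_adj[OF assms]] by simp
next
  assume a: "adj (induced_edges E V' F') Q \<subseteq> matched_to M Q"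
  have QF: "Q \<subseteq> F" using assms unfolding inv_def by blast
  have eq: "adj (induced_edges E V' F') Q = matched_to M Q" using a M_sub_adj[OF assms] by blast
  have "\<forall>F''. F'' \<subseteq> Q \<longrightarrow> card F'' \<le> card (adj (induced_edges E V' F') F'')"
  proof (intro allI impI)
    fix F'' assume "F'' \<subseteq> Q"
    hence s: "F'' \<subseteq> F'" "F'' \<subseteq> F" using assms QF by auto
    have "card F'' = card (matched_to M F'')" using matched_card[OF s(2)] by simp
    also have "\<dots> \<le> card (adj (induced_edges E V' F') F'')"
      using card_mono[OF adj_fin[OF assms(1) s(1)] M_sub_adj[OF assms(1) s(1)]] .
    finally show "card F'' \<le> card (adj (induced_edges E V' F') F'')" .
  qed
  thus "self_contained_set F' (induced_edges E V' F') Q"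
    unfolding self_contained_set_def using assms(2) eq matched_card[OF QF] by simp
qed


lemma back_closed:
  assumes inv: "inv V' F'" and SF: "S \<subseteq> F'"
    and ad: "adj (induced_edges E V' F') S \<subseteq> matched_to M S"
    and yz: "(y,z) \<in> G\<^sup>*" and z: "z \<in> S \<union> matched_to M S" and y: "y \<in> V' \<union> F'"
  shows "y \<in> S \<union> matched_to M S"
proof -
  have SF2: "S \<subseteq> F" using inv SF unfolding inv_def by blast
  have mS: "matched_to M S = {v. \<exists>g\<in>S. (v,g) \<in> M}" using matched_F[OF SF2] .
  have "y \<in> V' \<union> F' \<longrightarrow> y \<in> S \<union> matched_to M S"
    using yz
  proof (induction rule: converse_rtrancl_induct)
    case base then show ?case using z by simp
  next
    case (step y y')
    show ?case
    proof
      assume yV: "y \<in> V' \<union> F'"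
      hence "y' \<in> V' \<union> F'" using step(1) inv unfolding inv_def by blast
      hence y': "y' \<in> S \<union> matched_to M S" using step(3) by blast
      show "y \<in> S \<union> matched_to M S"
      proof (cases "y \<in> F")
        case True
        hence m: "(y',y) \<in> M" using G_from_F step(1) by blast
        have "y' \<notin> S" using m MVF SF2 VF by blast
        then obtain g where g: "g \<in> S" "(y',g) \<in> M" using y' mS by blast
        have "y = g" using M_unique_g m g(2) by blast
        thus ?thesis using g by blast
      next
        case False
        have "(y,y') \<in> E \<or> (y',y) \<in> E" using step(1) G_iff by blast
        hence yV: "y \<in> V" using False EVF by blast
        hence "y' \<in> F" using step(1) G_iff EVF VF by blast
        hence "(y,y') \<in> E" "y' \<in> S" using G_into_F step(1) y' mS MVF VF by blast+
        moreover have "y \<in> V'" using \<open>y \<in> V' \<union> F'\<close> yV inv VF unfolding inv_def by blast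
        ultimately have "y \<in> adj (induced_edges E V' F') S" using adj_E'_iff[OF inv SF] by blast
        thus ?thesis using ad by blast
      qed
    qed
  qed
  thus ?thesis using y by blast
qed


lemma min_basic:
  assumes inv: "inv V' F'" and ms: "minimal_self_contained F' (induced_edges E V' F') S"
  shows "S \<subseteq> F'" "S \<subseteq> F" "S \<noteq> {}" "adj (induced_edges E V' F') S = matched_to M S"
proof -
  show SF: "S \<subseteq> F'" using ms unfolding minimal_self_contained_def self_contained_set_def by blast
  thus "S \<subseteq> F" using inv unfolding inv_def by blast
  show "S \<noteq> {}" using ms unfolding minimal_self_contained_def by blast
  have "adj (induced_edges E V' F') S \<subseteq> matched_to M S"
    using ms sc_iff[OF inv SF] unfolding minimal_self_contained_def by blast
  thus "adj (induced_edges E V' F') S = matched_to M S" using M_sub_adj[OF inv SF] by blast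
qed

lemma min_reach:
  assumes inv: "inv V' F'" and ms: "minimal_self_contained F' (induced_edges E V' F') S"
    and f: "f \<in> S" and g: "g \<in> S"
  shows "(g,f) \<in> G\<^sup>*"
proof -
  note b = min_basic[OF inv ms]
  define P where "P = {g \<in> F'. (g,f) \<in> G\<^sup>*}"
  have PS: "P \<subseteq> S"
  proof
    fix h assume "h \<in> P"
    hence h: "h \<in> F'" "(h,f) \<in> G\<^sup>*" unfolding P_def by auto
    have "h \<in> S \<union> matched_to M S"
      using back_closed[OF inv b(1) _ h(2)] b(4) f h(1) by blast
    moreover have "h \<notin> matched_to M S" using matched_F[OF b(2)] MVF VF h(1) inv unfolding inv_def by blast
    ultimately show "h \<in> S" by blast
  qed
  have PF: "P \<subseteq> F'" unfolding P_def by blast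
  have PF2: "P \<subseteq> F" using PF inv unfolding inv_def by blast
  have fP: "f \<in> P" unfolding P_def using f b(1) by blast
  have "adj (induced_edges E V' F') P \<subseteq> matched_to M P"
  proof
    fix v assume "v \<in> adj (induced_edges E V' F') P"
    then obtain h where v: "v \<in> V'" "h \<in> P" "(v,h) \<in> E" using adj_E'_iff[OF inv PF] by blast
    show "v \<in> matched_to M P"
    proof (cases "(v,h) \<in> M")
      case True then show ?thesis using v(2) unfolding matched_to_def by blast
    next
      case False
      hence vh: "(v,h) \<in> G" using v(3) G_iff by blast
      have "v \<in> V - W" using v(1) inv unfolding inv_def by blast
      then obtain k where k: "(v,k) \<in> M" using cover_V by blast
      have kF: "k \<in> F'" using k v(1) inv unfolding inv_def by blast
      have "(k,v) \<in> G" using k G_iff MsubE by blast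
      hence "(k,f) \<in> G\<^sup>*" using vh v(2) unfolding P_def by auto
      hence "k \<in> P" unfolding P_def using kF by blast
      thus ?thesis using k unfolding matched_to_def by blast
    qed
  qed
  hence "self_contained_set F' (induced_edges E V' F') P" using sc_iff[OF inv PF] by blast
  hence "P = S" using ms PS fP unfolding minimal_self_contained_def by blast
  thus ?thesis using g unfolding P_def by blast
qed

lemma min_char:
  assumes inv: "inv V' F'" and ms: "minimal_self_contained F' (induced_edges E V' F') S"
    and f: "f \<in> S"
  shows "S \<union> adj (induced_edges E V' F') S = K f"
proof -
  note b = min_basic[OF inv ms]
  have mS: "matched_to M S = {v. \<exists>g\<in>S. (v,g) \<in> M}" using matched_F[OF b(2)] .
  have fX: "f \<in> X" using f b(2) by blast
  have sub1: "S \<subseteq> sc f"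
  proof
    fix g assume g: "g \<in> S"
    thus "g \<in> sc f" unfolding scc_def using min_reach[OF inv ms f g] min_reach[OF inv ms g f] b(2) by blast
  qed
  have sub2: "sc f \<subseteq> S \<union> matched_to M S"
  proof
    fix y assume "y \<in> sc f"
    hence y: "(y,f) \<in> G\<^sup>*" "(f,y) \<in> G\<^sup>*" unfolding scc_def by auto
    have "y \<in> V' \<union> F'" using inv_rtr[OF inv y(2)] f b(1) by blast
    thus "y \<in> S \<union> matched_to M S" using back_closed[OF inv b(1) _ y(1)] b(4) f by blast
  qed
  have "matched_to M (sc f) \<subseteq> S \<union> matched_to M S"
  proof
    fix y assume "y \<in> matched_to M (sc f)"
    then obtain x where x: "x \<in> sc f" "(x,y) \<in> M \<or> (y,x) \<in> M" unfolding matched_to_def by blast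
    have "x \<in> S \<union> matched_to M S" using sub2 x(1) by blast
    thus "y \<in> S \<union> matched_to M S"
    proof
      assume xS: "x \<in> S"
      hence "(y,x) \<in> M" using x(2) MVF VF b(2) by blast
      thus ?thesis using xS unfolding matched_to_def by blast
    next
      assume "x \<in> matched_to M S"
      then obtain g where g: "g \<in> S" "(x,g) \<in> M" using mS by blast
      have "(x,y) \<in> M" using x(2) g(2) MVF VF by blast
      hence "y = g" using M_unique_g g(2) by blast
      thus ?thesis using g by blast
    qed
  qed
  moreover have "matched_to M S \<subseteq> matched_to M (sc f)" using sub1 unfolding matched_to_def by blast
  ultimately show ?thesis using b(4) sub1 sub2 by blast
qed


definition EcF :: "'a set \<Rightarrow> ('a \<times> 'a set) set" where
  "EcF A = {(v, K f) | v f g. f \<in> A \<and> g \<in> K f \<and> g \<in> F \<and> (v,g) \<in> E \<and> v \<notin> K f}"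

definition Inv :: "('a set set \<times> ('a \<times> 'a set) set \<times> 'a set \<times> 'a set) \<Rightarrow> bool" where
  "Inv st \<longleftrightarrow> (case st of (Vc, Ec, V', F') \<Rightarrow>
     inv V' F' \<and> Vc = {{w} | w. w \<in> W} \<union> K ` (F - F') \<and> Ec = EcF (F - F'))"

lemma step_inv:
  assumes inv: "inv V' F'" and ms: "minimal_self_contained F' (induced_edges E V' F') S"
    and C: "C = S \<union> adj (induced_edges E V' F') S"
  shows "inv (V' - C) (F' - C)"
    and "F - (F' - C) = (F - F') \<union> S"
    and "K ` (F - (F' - C)) = insert C (K ` (F - F'))"
    and "EcF (F - (F' - C)) = EcF (F - F') \<union> {(v, C) | v. v \<in> adj E S - adj (induced_edges E V' F') S}"
    and "F' - C \<subset> F'"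
proof -
  note b = min_basic[OF inv ms]
  have mS: "matched_to M S = {v. \<exists>g\<in>S. (v,g) \<in> M}" using matched_F[OF b(2)] .
  have mV: "matched_to M S \<subseteq> V" using mS MVF by blast
  have CF: "C \<inter> F = S" using C b(2,4) mV VF by blast
  have CV: "C \<inter> V = matched_to M S" using C b(2,4) mV VF by blast
  have Kg: "\<And>g. g \<in> S \<Longrightarrow> K g = C" using min_char[OF inv ms] C by blast
  have i: "F' \<subseteq> F" "V' \<subseteq> V - W" "\<And>v g. (v,g) \<in> M \<Longrightarrow> (v \<in> V' \<longleftrightarrow> g \<in> F')"
    "\<And>x y. (x,y) \<in> G \<Longrightarrow> x \<in> V' \<union> F' \<Longrightarrow> y \<in> V' \<union> F'" using inv unfolding inv_def by blast+
  show "inv (V' - C) (F' - C)"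
    unfolding inv_def
  proof (intro conjI allI impI)
    show "F' - C \<subseteq> F" "V' - C \<subseteq> V - W" using i by auto
  next
    fix v g assume vg: "(v,g) \<in> M"
    have "v \<in> C \<longleftrightarrow> g \<in> C"
    proof
      assume "v \<in> C"
      hence "v \<in> matched_to M S" using CV vg MVF by blast
      then obtain h where "h \<in> S" "(v,h) \<in> M" using mS by blast
      thus "g \<in> C" using M_unique_g vg C by blast
    next
      assume "g \<in> C"
      hence "g \<in> S" using CF vg MVF by blast
      hence "v \<in> matched_to M S" using mS vg by blast
      thus "v \<in> C" using CV by blast
    qed
    thus "(v \<in> V' - C) = (g \<in> F' - C)" using i(3)[OF vg] by blast
  next
    fix x y assume xy: "(x,y) \<in> G" and x: "x \<in> V' - C \<union> (F' - C)"
    have y: "y \<in> V' \<union> F'" using i(4)[OF xy] x by blast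
    have "y \<notin> C"
    proof
      assume yC: "y \<in> C"
      show False
      proof (cases "y \<in> F")
        case True
        hence yS: "y \<in> S" using CF yC by blast
        have "(x,y) \<in> E" using G_into_F[OF xy True] by blast
        hence "x \<in> V" using EVF by blast
        hence "x \<in> V'" using x i(1) VF by blast
        hence "x \<in> adj (induced_edges E V' F') S" using adj_E'_iff[OF inv b(1)] yS \<open>(x,y) \<in> E\<close> by blast
        thus False using x C by blast
      next
        case False
        hence "y \<in> V" using G_X[OF xy] by blast
        hence m: "(y,x) \<in> M" using G_into_V[OF xy] by blast
        have "y \<in> matched_to M S" using yC CV \<open>y \<in> V\<close> by blast
        then obtain h where "h \<in> S" "(y,h) \<in> M" using mS by blast
        hence "x \<in> S" using M_unique_g m by blast
        thus False using x C by blast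
      qed
    qed
    thus "y \<in> V' - C \<union> (F' - C)" using y by blast
  qed
  show FS: "F - (F' - C) = (F - F') \<union> S" using CF b(1) i(1) by blast
  show "K ` (F - (F' - C)) = insert C (K ` (F - F'))"
  proof -
    have KS: "K ` S = {C}" using Kg b(3) by blast
    have "K ` (F - (F' - C)) = K ` (F - F') \<union> K ` S" unfolding FS by (rule image_Un)
    thus ?thesis unfolding KS by simp
  qed
  have ES: "EcF S = {(v, C) | v. v \<in> adj E S - adj (induced_edges E V' F') S}"
  proof
    show "EcF S \<subseteq> {(v, C) | v. v \<in> adj E S - adj (induced_edges E V' F') S}"
    proof
      fix p assume "p \<in> EcF S"
      then obtain v f g where p: "p = (v, K f)" "f \<in> S" "g \<in> K f" "g \<in> F" "(v,g) \<in> E" "v \<notin> K f"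
        unfolding EcF_def by blast
      have "g \<in> S" using p(2,3,4) Kg CF by blast
      hence "v \<in> adj E S" unfolding adj_def using p(5) by blast
      moreover have "v \<notin> adj (induced_edges E V' F') S" using p(2,6) Kg C by blast
      ultimately show "p \<in> {(v, C) | v. v \<in> adj E S - adj (induced_edges E V' F') S}"
        using p(1,2) Kg by blast
    qed
  next
    show "{(v, C) | v. v \<in> adj E S - adj (induced_edges E V' F') S} \<subseteq> EcF S"
    proof
      fix p assume "p \<in> {(v, C) | v. v \<in> adj E S - adj (induced_edges E V' F') S}"
      then obtain v where p: "p = (v, C)" "v \<in> adj E S" "v \<notin> adj (induced_edges E V' F') S" by blast
      obtain g where g: "g \<in> S" "(g,v) \<in> E \<or> (v,g) \<in> E" using p(2) unfolding adj_def by blast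
      have vg: "(v,g) \<in> E" using g b(2) EVF VF by blast
      hence "v \<in> V" using EVF by blast
      hence "v \<notin> C" using p(3) C b(2) VF by blast
      thus "p \<in> EcF S" unfolding EcF_def using p(1) g(1) vg Kg[OF g(1)] CF by blast
    qed
  qed
  have EU: "EcF (A \<union> B) = EcF A \<union> EcF B" for A B unfolding EcF_def by blast
  show "EcF (F - (F' - C)) = EcF (F - F') \<union> {(v, C) | v. v \<in> adj E S - adj (induced_edges E V' F') S}"
    unfolding FS EU ES by (rule refl)
  show "F' - C \<subset> F'" using b(1,3) C by blast
qed

lemma Inv_step: "alg1_step E st st' \<Longrightarrow> Inv st \<Longrightarrow> Inv st'"
proof (induction rule: alg1_step.induct)
  case (1 F' V' S C Vc Ec)
  have inv: "inv V' F'" and Vc: "Vc = {{w} | w. w \<in> W} \<union> K ` (F - F')" and Ec: "Ec = EcF (F - F')"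
    using 1(3) unfolding Inv_def by auto
  note s = step_inv[OF inv 1(1) 1(2)]
  show ?case unfolding Inv_def using s(1,3,4) Vc Ec by auto
qed

lemma Inv_init: "Inv ({{w} | w. w \<in> W}, {}, V - W, F)"
proof -
  have "inv (V - W) F"
    unfolding inv_def
  proof (intro conjI allI impI)
    fix x y assume xy: "(x,y) \<in> G" "x \<in> V - W \<union> F"
    show "y \<in> V - W \<union> F"
    proof (cases "y \<in> F")
      case False
      hence "y \<in> V" using G_X[OF xy(1)] by blast
      hence "(y,x) \<in> M" using G_into_V[OF xy(1)] by blast
      thus ?thesis using MVF by blast
    qed simp
  qed (use MVF in auto)
  moreover have "EcF {} = {}" unfolding EcF_def by blast
  ultimately show ?thesis unfolding Inv_def by simp
qed


lemma Inv_rtr: "(alg1_step E)\<^sup>*\<^sup>* st st' \<Longrightarrow> Inv st \<Longrightarrow> Inv st'"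
  by (induction rule: rtranclp_induct) (auto intro: Inv_step)

lemma run_exists:
  "Inv (Vc, Ec, V', F') \<Longrightarrow> \<exists>Vc' Ec'. (alg1_step E)\<^sup>*\<^sup>* (Vc, Ec, V', F') (Vc', Ec', {}, {})"
proof (induction "card F'" arbitrary: Vc Ec V' F' rule: less_induct)
  case less
  have inv: "inv V' F'" using less(2) unfolding Inv_def by simp
  have F'F: "F' \<subseteq> F" and V'V: "V' \<subseteq> V - W" using inv unfolding inv_def by auto
  have finF': "finite F'" using F'F finF finite_subset by blast
  have part: "\<And>v. v \<in> V' \<Longrightarrow> \<exists>g \<in> F'. (v,g) \<in> M"
  proof -
    fix v assume v: "v \<in> V'"
    then obtain g where "(v,g) \<in> M" using cover_V V'V by blast
    thus "\<exists>g \<in> F'. (v,g) \<in> M" using v inv unfolding inv_def by blast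
  qed
  show ?case
  proof (cases "F' = {}")
    case True
    hence "V' = {}" using part by blast
    thus ?thesis using True by blast
  next
    case False
    let ?E' = "induced_edges E V' F'"
    have "adj ?E' F' \<subseteq> matched_to M F'"
    proof
      fix v assume "v \<in> adj ?E' F'"
      hence "v \<in> V'" using adj_E'_iff[OF inv] by blast
      thus "v \<in> matched_to M F'" using part unfolding matched_to_def by blast
    qed
    hence scF: "self_contained_set F' ?E' F'" using sc_iff[OF inv] by blast
    define P where "P = (\<lambda>Q. Q \<noteq> {} \<and> self_contained_set F' ?E' Q)"
    have "P F'" unfolding P_def using False scF by blast
    then obtain S where S: "P S" and Smin: "\<And>Q. P Q \<Longrightarrow> card S \<le> card Q"
      using ex_has_least_nat[of P F' card] by blast
    have SF: "S \<subseteq> F'" using S unfolding P_def self_contained_set_def by blast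
    have ms: "minimal_self_contained F' ?E' S"
      unfolding minimal_self_contained_def
    proof (intro conjI allI impI)
      show "S \<noteq> {}" "self_contained_set F' ?E' S" using S unfolding P_def by auto
    next
      fix S' assume a: "S' \<subset> S \<and> S' \<noteq> {}"
      show "\<not> self_contained_set F' ?E' S'"
      proof
        assume "self_contained_set F' ?E' S'"
        hence "card S \<le> card S'" using Smin a unfolding P_def by blast
        moreover have "card S' < card S" using psubset_card_mono[OF finite_subset[OF SF finF'] ] a by blast
        ultimately show False by simp
      qed
    qed
    define C where "C = S \<union> adj ?E' S"
    have st: "alg1_step E (Vc, Ec, V', F')
        (insert C Vc, Ec \<union> {(v, C) | v. v \<in> adj E S - adj ?E' S}, V' - C, F' - C)"
      using alg1_step.intros[OF ms C_def] .
    have Inv': "Inv (insert C Vc, Ec \<union> {(v, C) | v. v \<in> adj E S - adj ?E' S}, V' - C, F' - C)"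
      using Inv_step[OF st less(2)] .
    have "card (F' - C) < card F'" using psubset_card_mono[OF finF' step_inv(5)[OF inv ms C_def]] .
    then obtain Vc' Ec' where "(alg1_step E)\<^sup>*\<^sup>* (insert C Vc, Ec \<union> {(v, C) | v. v \<in> adj E S - adj ?E' S}, V' - C, F' - C) (Vc', Ec', {}, {})"
      using less(1)[OF _ Inv'] by blast
    thus ?thesis using st converse_rtranclp_into_rtranclp by fast
  qed
qed


lemma sc_mem: "x \<in> X \<Longrightarrow> x \<in> sc x" unfolding scc_def by simp

lemma sc_eq: assumes "(x,y) \<in> G\<^sup>*" "(y,x) \<in> G\<^sup>*" shows "sc x = sc y"
proof -
  have "z \<in> sc x \<longleftrightarrow> z \<in> sc y" for z
    unfolding scc_def using assms rtrancl_trans[of _ _ G] by blast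
  thus ?thesis by blast
qed

lemma K_W: assumes w: "w \<in> W" shows "K w = {w}"
proof -
  have "y = w" if "y \<in> sc w" for y
  proof (rule ccontr)
    assume ne: "y \<noteq> w"
    have "(y,w) \<in> G\<^sup>*" using that unfolding scc_def by blast
    then obtain u where "(u,w) \<in> G" using ne by (auto elim: rtranclE)
    hence "(w,u) \<in> M" using G_into_V w WV by blast
    thus False using MVF w by blast
  qed
  hence s: "sc w = {w}" using sc_mem[of w] w WV by blast
  have "matched_to M {w} = {}" unfolding matched_to_def using MVF w VF WV by blast
  thus ?thesis using s by simp
qed

lemma into_V_unique: "(u,x) \<in> G \<Longrightarrow> (x,g) \<in> M \<Longrightarrow> u = g"
proof -
  assume a: "(u,x) \<in> G" "(x,g) \<in> M"
  hence "x \<in> V" using MVF by blast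
  hence "(x,u) \<in> M" using G_into_V a(1) by blast
  thus "u = g" using M_unique_g a(2) by blast
qed

lemma from_F_unique: "(g,y) \<in> G \<Longrightarrow> (x,g) \<in> M \<Longrightarrow> y = x"
proof -
  assume a: "(g,y) \<in> G" "(x,g) \<in> M"
  hence "g \<in> F" using MVF by blast
  hence "(y,g) \<in> M" using G_from_F a(1) by blast
  thus "y = x" using M_unique_v a(2) by blast
qed

lemma K_M: assumes xg: "(x,g) \<in> M" shows "K x = K g"
proof (cases "(x,g) \<in> G\<^sup>*")
  case True
  have "(g,x) \<in> G" using xg G_iff MsubE by blast
  hence "sc x = sc g" using sc_eq True by blast
  thus ?thesis by simp
next
  case False
  have gx: "(g,x) \<in> G" using xg G_iff MsubE by blast
  have xX: "x \<in> X" "g \<in> X" using xg MVF by auto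
  have "y = x" if "y \<in> sc x" for y
  proof (rule ccontr)
    assume ne: "y \<noteq> x"
    have yx: "(y,x) \<in> G\<^sup>*" "(x,y) \<in> G\<^sup>*" using that unfolding scc_def by auto
    then obtain u where u: "(y,u) \<in> G\<^sup>*" "(u,x) \<in> G" using ne by (auto elim: rtranclE)
    have "u = g" using into_V_unique[OF u(2) xg] .
    hence "(x,g) \<in> G\<^sup>*" using yx(2) u(1) by auto
    thus False using False by blast
  qed
  hence s1: "sc x = {x}" using sc_mem xX by blast
  have "y = g" if "y \<in> sc g" for y
  proof (rule ccontr)
    assume ne: "y \<noteq> g"
    have yx: "(y,g) \<in> G\<^sup>*" "(g,y) \<in> G\<^sup>*" using that unfolding scc_def by auto
    then obtain u where u: "(g,u) \<in> G" "(u,y) \<in> G\<^sup>*" using ne by (auto elim: converse_rtranclE)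
    have "u = x" using from_F_unique[OF u(1) xg] .
    hence "(x,g) \<in> G\<^sup>*" using yx(1) u(2) by auto
    thus False using False by blast
  qed
  hence s2: "sc g = {g}" using sc_mem xX by blast
  have m1: "matched_to M {x} = {g}"
    unfolding matched_to_def using xg M_unique_g MVF VF by blast
  have m2: "matched_to M {g} = {x}"
    unfolding matched_to_def using xg M_unique_v MVF VF by blast
  show ?thesis using s1 s2 m1 m2 by auto
qed

lemma K_F: assumes f: "f \<in> F" and g: "g \<in> K f" "g \<in> F" shows "K g = K f"
proof -
  have "g \<in> sc f"
  proof (cases "g \<in> sc f")
    case False
    then obtain x where x: "x \<in> sc f" "(x,g) \<in> M \<or> (g,x) \<in> M" using g(1) unfolding matched_to_def by blast
    have xg: "(x,g) \<in> M" using x(2) g(2) MVF VF by blast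
    have "x \<noteq> f" using xg MVF VF f by blast
    moreover have fx: "(f,x) \<in> G\<^sup>*" "(x,f) \<in> G\<^sup>*" using x(1) unfolding scc_def by auto
    ultimately obtain u where u: "(f,u) \<in> G\<^sup>*" "(u,x) \<in> G" by (auto elim: rtranclE)
    have "u = g" using into_V_unique[OF u(2) xg] .
    hence "(f,g) \<in> G\<^sup>*" using u(1) by simp
    moreover have "(g,x) \<in> G" using xg G_iff MsubE by blast
    hence "(g,f) \<in> G\<^sup>*" using fx(2) by auto
    ultimately show ?thesis unfolding scc_def using g(2) by blast
  qed
  hence "(g,f) \<in> G\<^sup>*" "(f,g) \<in> G\<^sup>*" unfolding scc_def by auto
  hence "sc g = sc f" using sc_eq by blast
  thus ?thesis by simp
qed


lemma alg2_raw: "alg2_output V F E M =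
   (K ` X, {(x, K w) | x w. (x,w) \<in> G \<and> x \<notin> sc w \<and> x \<notin> matched_to M (sc w)})"
proof -
  have 1: "{S \<union> matched_to M S | S. S \<in> sc ` X} = K ` X" by blast
  have 2: "{(x, S \<union> matched_to M S) | x S. (x, S) \<in> {(x, sc w) | x w. (x, w) \<in> G \<and> x \<notin> sc w}
             \<and> x \<notin> matched_to M S}
         = {(x, K w) | x w. (x,w) \<in> G \<and> x \<notin> sc w \<and> x \<notin> matched_to M (sc w)}" by blast
  show ?thesis unfolding alg2_output_def alg2_clusters_def Let_def using 1 2 by simp
qed

lemma alg2_eq: "alg2_output V F E M = ({{w} | w. w \<in> W} \<union> K ` F, EcF F)"
proof -
  have A: "K ` X = {{w} | w. w \<in> W} \<union> K ` F"
  proof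
    show "K ` X \<subseteq> {{w} | w. w \<in> W} \<union> K ` F"
    proof
      fix c assume "c \<in> K ` X"
      then obtain x where x: "x \<in> X" "c = K x" by blast
      show "c \<in> {{w} | w. w \<in> W} \<union> K ` F"
      proof (cases "x \<in> W")
        case True then show ?thesis using K_W x by blast
      next
        case False
        show ?thesis
        proof (cases "x \<in> F")
          case True then show ?thesis using x by blast
        next
          case False2: False
          hence "x \<in> V - W" using x False by blast
          then obtain g where "(x,g) \<in> M" using cover_V by blast
          hence "K x = K g" "g \<in> F" using K_M MVF by blast+
          thus ?thesis using x by blast
        qed
      qed
    qed
  next
    show "{{w} | w. w \<in> W} \<union> K ` F \<subseteq> K ` X"
    proof
      fix c assume "c \<in> {{w} | w. w \<in> W} \<union> K ` F"
      then consider w where "w \<in> W" "c = {w}" | f where "f \<in> F" "c = K f" by blast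
      thus "c \<in> K ` X"
      proof cases
        case 1 then show ?thesis using K_W[of w] WV by blast
      next
        case 2 then show ?thesis by blast
      qed
    qed
  qed
  have B: "{(x, K w) | x w. (x,w) \<in> G \<and> x \<notin> sc w \<and> x \<notin> matched_to M (sc w)} = EcF F"
  proof
    show "{(x, K w) | x w. (x,w) \<in> G \<and> x \<notin> sc w \<and> x \<notin> matched_to M (sc w)} \<subseteq> EcF F"
    proof
      fix p assume "p \<in> {(x, K w) | x w. (x,w) \<in> G \<and> x \<notin> sc w \<and> x \<notin> matched_to M (sc w)}"
      then obtain x w where p: "p = (x, K w)" "(x,w) \<in> G" "x \<notin> sc w" "x \<notin> matched_to M (sc w)" by blast
      have wX: "w \<in> X" using G_X p(2) by blast
      show "p \<in> EcF F"
      proof (cases "w \<in> F")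
        case True
        have "(x,w) \<in> E" using G_into_F[OF p(2) True] by blast
        moreover have "w \<in> K w" using sc_mem wX by blast
        ultimately show ?thesis unfolding EcF_def using p True by blast
      next
        case False
        hence "w \<in> V" using wX by blast
        hence "(w,x) \<in> M" using G_into_V p(2) by blast
        hence "x \<in> matched_to M (sc w)" using sc_mem wX unfolding matched_to_def by blast
        thus ?thesis using p(4) by blast
      qed
    qed
  next
    show "EcF F \<subseteq> {(x, K w) | x w. (x,w) \<in> G \<and> x \<notin> sc w \<and> x \<notin> matched_to M (sc w)}"
    proof
      fix p assume "p \<in> EcF F"
      then obtain v f g where p: "p = (v, K f)" "f \<in> F" "g \<in> K f" "g \<in> F" "(v,g) \<in> E" "v \<notin> K f"
        unfolding EcF_def by blast
      have Kg: "K g = K f" using K_F p(2,3,4) by blast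
      have gs: "g \<in> sc g" using sc_mem p(4) by blast
      have "(v,g) \<notin> M"
      proof
        assume "(v,g) \<in> M"
        hence "v \<in> K g" using gs unfolding matched_to_def by blast
        thus False using Kg p(6) by blast
      qed
      hence "(v,g) \<in> G" using p(5) G_iff by blast
      moreover have "v \<notin> sc g" "v \<notin> matched_to M (sc g)" using Kg p(6) by blast+
      ultimately have "(v, K g) \<in> {(x, K w) | x w. (x,w) \<in> G \<and> x \<notin> sc w \<and> x \<notin> matched_to M (sc w)}"
        by blast
      thus "p \<in> {(x, K w) | x w. (x,w) \<in> G \<and> x \<notin> sc w \<and> x \<notin> matched_to M (sc w)}"
        using p(1) Kg by simp
    qed
  qed
  show ?thesis unfolding alg2_raw A B ..
qed

end

theorem theorem6:
  fixes V F W :: "'a set" and E :: "('a \<times> 'a) set"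
  assumes "finite V" and "finite F" and "bipartite V F E" and "W \<subseteq> V"
    and "self_contained (V - W) F (induced_edges E (V - W) F)"
  shows "\<forall>M. perfect_matching ((V - W) \<union> F) (induced_edges E (V - W) F) M \<longrightarrow>
           (\<exists>Out. alg1_output V F E W Out) \<and>
           (\<forall>Out. alg1_output V F E W Out \<longrightarrow> alg2_output V F E M = Out)"
proof (intro allI impI)
  fix M assume pm: "perfect_matching ((V - W) \<union> F) (induced_edges E (V - W) F) M"
  interpret s: setting V F W E M using assms(1-4) pm by unfold_locales
  show "(\<exists>Out. alg1_output V F E W Out) \<and>
           (\<forall>Out. alg1_output V F E W Out \<longrightarrow> alg2_output V F E M = Out)"
  proof
    obtain Vc' Ec' where "(alg1_step E)\<^sup>*\<^sup>* ({{w} | w. w \<in> W}, {}, V - W, F) (Vc', Ec', {}, {})"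
      using s.run_exists[OF s.Inv_init] by blast
    thus "\<exists>Out. alg1_output V F E W Out" unfolding alg1_output_def by blast
  next
    show "\<forall>Out. alg1_output V F E W Out \<longrightarrow> alg2_output V F E M = Out"
    proof (intro allI impI)
      fix Out assume "alg1_output V F E W Out"
      then obtain Vc Ec where r: "(alg1_step E)\<^sup>*\<^sup>* ({{w} | w. w \<in> W}, {}, V - W, F) (Vc, Ec, {}, {})"
        and O: "Out = (Vc, Ec)" unfolding alg1_output_def by blast
      have "s.Inv (Vc, Ec, {}, {})" using s.Inv_rtr[OF r s.Inv_init] .
      hence "Vc = {{w} | w. w \<in> W} \<union> s.K ` F" "Ec = s.EcF F" unfolding s.Inv_def by auto
      thus "alg2_output V F E M = Out" using s.alg2_eq O by simp
    qed
  qed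
qed

end
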